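(* For all integers $m\ge 1$ and $n\ge0$, $$\sum_{k=0}^{n}\begin{bmatrix}n\\k\end{bmatrix}q^{\binom k2}\,[m+2k]\,\frac{[m+k-1]!}{[m+n+k]!}=\frac{(-1;q)_n}{[m+1]\,[m+3]\cdots[m+2n-1]},$$ the empty product for $n=0$ being $1$. Equivalently, for an indeterminate $a$, $$\sum_{k=0}^{n}\begin{bmatrix}n\\k\end{bmatrix}q^{\binom k2}\frac{1-q^{2k}a}{(q^ka;q)_{n+1}}=\frac{(-1;q)_n}{(qa;q^2)_n}.$$
   Context: $q$ is an indeterminate; $[n]=\frac{1-q^n}{1-q}$, $[n]!=[1]\cdots[n]$, $[0]!=1$, $\begin{bmatrix}n\\k\end{bmatrix}=\frac{[n]!}{[k]![n-k]!}$; $(a;q)_n=(1-a)(1-qa)\cdots(1-q^{n-1}a)$, $(a;q)_0=1$. *)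

theory Defs
  imports "HOL-Computational_Algebra.Polynomial" "HOL-Computational_Algebra.Fraction_Field"
begin

text \<open>q-analogues over an arbitrary field; q will be instantiated with a genuine
indeterminate.\<close>

definition qint :: "'a::field \<Rightarrow> nat \<Rightarrow> 'a" where
  "qint q n = (1 - q ^ n) / (1 - q)"

definition qfact :: "'a::field \<Rightarrow> nat \<Rightarrow> 'a" where
  "qfact q n = (\<Prod>i=1..n. qint q i)"

definition qbinom :: "'a::field \<Rightarrow> nat \<Rightarrow> nat \<Rightarrow> 'a" where
  "qbinom q n k = qfact q n / (qfact q k * qfact q (n - k))"

definition qpoch :: "'a::field \<Rightarrow> 'a \<Rightarrow> nat \<Rightarrow> 'a" where
  "qpoch a q n = (\<Prod>i<n. (1 - q ^ i * a))"

definition qX :: "rat poly fract" where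
  "qX = Fract [:0, 1:] 1"

end

theory Submission
  imports Defs
begin

definition Qp :: "'a::field \<Rightarrow> nat \<Rightarrow> 'a" where "Qp q s = (\<Prod>i=1..s. 1 - q^i)"
definition Pp :: "'a::field \<Rightarrow> nat \<Rightarrow> nat \<Rightarrow> 'a" where "Pp q s l = (\<Prod>i<l. 1 - q^(s+i))"
definition bn :: "'a::field \<Rightarrow> nat \<Rightarrow> nat \<Rightarrow> 'a" where
  "bn q n k = (if k \<le> n then Qp q n / (Qp q k * Qp q (n-k)) else 0)"
definition FF :: "'a::field \<Rightarrow> nat \<Rightarrow> nat \<Rightarrow> nat \<Rightarrow> 'a" where
  "FF q m n k = bn q n k * q^(k choose 2) * (1 - q^(m+2*k)) / Pp q (m+k) (n+1)"
definition HH :: "'a::field \<Rightarrow> nat \<Rightarrow> nat \<Rightarrow> nat \<Rightarrow> 'a" where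
  "HH q m n k = (if k = 0 then 0 else
     q^(n + ((k-1) choose 2)) * bn q n (k-1) * (1 - q^(m+2*k-1)) / Pp q (m+k) (n+1))"

lemma Qp_0[simp]: "Qp q 0 = 1" by (simp add: Qp_def)
lemma Qp_Suc: "Qp q (Suc s) = Qp q s * (1 - q^(Suc s))"
  by (simp add: Qp_def prod.nat_ivl_Suc' mult.commute)
lemma Pp_0[simp]: "Pp q s 0 = 1" by (simp add: Pp_def)
lemma Pp_Suc: "Pp q s (Suc l) = Pp q s l * (1 - q^(s+l))"
  by (simp add: Pp_def)
lemma Pp_Suc_left: "Pp q s (Suc l) = (1 - q^s) * Pp q (Suc s) l"
  unfolding Pp_def by (subst prod.lessThan_Suc_shift) simp
lemma Qp_add: "Qp q (s+l) = Qp q s * Pp q (Suc s) l"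
  by (induction l) (simp_all add: Qp_Suc Pp_Suc)

lemma alg:
  fixes q b u w c A Qj Qr P0 d1 d2 d3 d4 :: "'a::field"
  assumes nz: "Qj \<noteq> 0" "Qr \<noteq> 0" "P0 \<noteq> 0" "d1 \<noteq> 0" "d2 \<noteq> 0" "d3 \<noteq> 0" "d4 \<noteq> 0"
  and eqs: "d1 = 1 - q*u" "d2 = 1 - q*w" "d3 = 1 - q^3*u^2*w*b" "d4 = 1 - q*u*b"
  shows "(1 - q^3*u^2*w^2*b) * (A*(1-q^2*u*w)/(Qj*d1*Qr*d2)*(c*u)*(1-q^2*u^2*b)/(P0*d3))
     - (1 + q*u*w) * (A/(Qj*d1*Qr)*(c*u)*(1-q^2*u^2*b)/P0)
     = (q*u*w)*c*(A/(Qj*Qr*d2))*(1-q*u^2*b)/P0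
     - (q*u*w)*(c*u)*(A/(Qj*d1*Qr))*(1-q^3*u^2*b)/(P0*d3/d4)"
  using nz apply (simp add: field_simps)
  unfolding eqs by algebra

context
  fixes q :: "'a::field"
  assumes q0: "q \<noteq> 0" and qn: "\<And>j. j \<ge> 1 \<Longrightarrow> q^j \<noteq> 1"
begin

lemma nz1: "j \<ge> 1 \<Longrightarrow> 1 - q^j \<noteq> 0" using qn by auto
lemma Qp_nz: "Qp q s \<noteq> 0" unfolding Qp_def using nz1 by (auto simp: prod_zero_iff)
lemma Pp_nz: "s \<ge> 1 \<Longrightarrow> Pp q s l \<noteq> 0" unfolding Pp_def using nz1 by (auto simp: prod_zero_iff)

lemma bn_0[simp]: "bn q n 0 = 1" unfolding bn_def using Qp_nz by simp
lemma ch0[simp]: "(0::nat) choose 2 = 0" "(1::nat) choose 2 = 0" by (simp_all add: binomial_eq_0)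

lemma key0: "(1 - q^(m+2*n+1)) * FF q m (Suc n) 0 - (1+q^n) * FF q m n 0 = HH q m n 0 - HH q m n 1"
  if "m \<ge> 1" for m n
proof -
  define b where "b = q^m"
  define v where "v = q^n"
  define R where "R = Pp q (Suc m) n"
  have R: "R \<noteq> 0" unfolding R_def by (rule Pp_nz) simp
  have b: "1 - b \<noteq> 0" unfolding b_def using nz1 that .
  have b1: "1 - q*b \<noteq> 0" unfolding b_def using nz1[of "Suc m"] by simp
  have b2: "1 - q*b*v \<noteq> 0" unfolding b_def v_def using nz1[of "Suc (m+n)"] by (simp add: power_add mult.assoc)
  have e1: "Pp q m (Suc n + 1) = (1-b)*(R*(1-q*b*v))"
    using Pp_Suc_left[of q m "Suc n"] Pp_Suc[of q "Suc m" n]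
    by (simp add: R_def b_def v_def power_add mult.assoc)
  have e2: "Pp q m (n + 1) = (1-b)*R"
    using Pp_Suc_left[of q m n] by (simp add: R_def b_def)
  have e3: "Pp q (m+1) (n + 1) = R*(1-q*b*v)"
    using Pp_Suc[of q "Suc m" n] by (simp add: R_def b_def v_def power_add mult.assoc)
  have X: "(1 - q^(m+2*n+1)) = 1 - q*v^2*b" by (simp add: b_def v_def power_add power_mult power2_eq_square mult_ac)
  have V: "1 + q^n = 1 + v" by (simp add: v_def)
  define d where "d = 1 - q*b*v"
  have d: "d \<noteq> 0" using b2 d_def by simp
  have F1: "FF q m (Suc n) 0 = 1/(R*d)"
    unfolding FF_def using e1 b by (simp add: b_def d_def)
  have F0: "FF q m n 0 = 1/R"
    unfolding FF_def using e2 b by (simp add: b_def)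
  have H1: "HH q m n 1 = v*(1-q*b)/(R*d)"
    unfolding HH_def using e3 by (simp add: b_def v_def d_def mult_ac)
  have H0: "HH q m n 0 = 0" by (simp add: HH_def)
  show ?thesis unfolding X V F1 F0 H1 H0 using R d
    apply (simp add: field_simps) unfolding d_def by algebra
qed

lemma bn_self[simp]: "bn q n n = 1" unfolding bn_def using Qp_nz by simp
lemma bn_gt[simp]: "n < k \<Longrightarrow> bn q n k = 0" unfolding bn_def by simp
lemma choose2_Suc: "Suc j choose 2 = j + (j choose 2)" by (simp add: numeral_2_eq_2)

lemma keyLast: "(1 - q^(m+2*n+1)) * FF q m (Suc n) (Suc n) - (1+q^n) * FF q m n (Suc n)
    = HH q m n (Suc n) - HH q m n (Suc (Suc n))"
  if "m \<ge> 1" for m n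
proof -
  define P where "P = Pp q (m + Suc n) (Suc n)"
  define y where "y = 1 - q^(m+2*Suc n)"
  have P: "P \<noteq> 0" unfolding P_def by (rule Pp_nz) simp
  have y: "y \<noteq> 0" unfolding y_def by (rule nz1) simp
  have e: "Pp q (m + Suc n) (Suc n + 1) = P * y"
    using Pp_Suc[of q "m + Suc n" "Suc n"] by (simp add: P_def y_def mult_2 add.assoc)
  have F1: "FF q m (Suc n) (Suc n) = q^(n + (n choose 2)) * y / (P*y)"
    unfolding FF_def e by (simp add: y_def choose2_Suc)
  have F0: "FF q m n (Suc n) = 0" unfolding FF_def by simp
  have H1: "HH q m n (Suc (Suc n)) = 0" unfolding HH_def by simp
  have H0: "HH q m n (Suc n) = q^(n + (n choose 2)) * (1 - q^(m+2*n+1)) / P"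
    unfolding HH_def by (simp add: P_def)
  show ?thesis unfolding F1 F0 H1 H0 using P y by (simp add: field_simps)
qed

lemma keyMid: "(1 - q^(m+2*n+1)) * FF q m (Suc n) k - (1+q^n) * FF q m n k
    = HH q m n k - HH q m n (Suc k)"
  if "m \<ge> 1" and n: "n = Suc (j+r)" and k: "k = Suc j" for m n k j r
proof -
  define A where "A = Qp q n"
  define Qj where "Qj = Qp q j"
  define Qr where "Qr = Qp q r"
  define P0 where "P0 = Pp q (m+k) (Suc n)"
  define u where "u = q^j"
  define w where "w = q^r"
  define b where "b = q^m"
  define c where "c = q^(j choose 2)"
  define d1 where "d1 = 1 - q*u"
  define d2 where "d2 = 1 - q*w"
  define d3 where "d3 = 1 - q^3*u^2*w*b"
  define d4 where "d4 = 1 - q*u*b"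
  have pw: "q^(a1+a2) = q^a1 * q^a2" for a1 a2 by (rule power_add)
  have x1: "q^(m+2*k) = q^2*u^2*b"
  proof - have "m+2*k = 2 + j + j + m" using k by simp
    thus ?thesis by (simp only: pw u_def b_def power2_eq_square mult_ac) qed
  have x2: "q^(m+2*k-1) = q*u^2*b"
  proof - have "m+2*k-1 = 1 + j + j + m" using k by simp
    thus ?thesis by (simp only: pw u_def b_def power2_eq_square power_one_right mult_ac) qed
  have x3: "q^(m+2*Suc k-1) = q^3*u^2*b"
  proof - have "m+2*Suc k-1 = 3 + j + j + m" using k by simp
    thus ?thesis by (simp only: pw u_def b_def power2_eq_square mult_ac) qed
  have x4: "q^(m+2*n+1) = q^3*u^2*w^2*b"
  proof - have "m+2*n+1 = 3 + j + j + r + r + m" using n by simp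
    thus ?thesis by (simp only: pw u_def w_def b_def power2_eq_square mult_ac) qed
  have x5: "q^n = q*u*w"
  proof - have "n = 1 + j + r" using n by simp
    thus ?thesis by (simp only: pw u_def w_def power_one_right mult_ac) qed
  have x6: "q^(k choose 2) = c*u"
    using k by (simp add: choose2_Suc c_def u_def power_add mult_ac)
  have x7: "q^(n + ((k-1) choose 2)) = q*u*w*c"
    using k x5 by (simp add: c_def power_add)
  have x8: "q^(n + ((Suc k - 1) choose 2)) = q*u*w*(c*u)"
    using x5 x6 by (simp add: power_add)
  have x9: "q^(Suc n) = q^2*u*w"
  proof - have "Suc n = 2 + j + r" using n by simp
    thus ?thesis by (simp only: pw u_def w_def mult_ac) qed
  have x10: "q^(m+k+Suc n) = q^3*u^2*w*b"
  proof - have "m+k+Suc n = 3 + j + j + r + m" using n k by simp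
    thus ?thesis by (simp only: pw u_def w_def b_def power2_eq_square mult_ac) qed
  have x11: "q^(m+k) = q*u*b"
  proof - have "m+k = 1 + j + m" using k by simp
    thus ?thesis by (simp only: pw u_def b_def power_one_right mult_ac) qed
  have nzQj: "Qj \<noteq> 0" "Qr \<noteq> 0" "A \<noteq> 0" unfolding Qj_def Qr_def A_def by (rule Qp_nz)+
  have nzP0: "P0 \<noteq> 0" unfolding P0_def by (rule Pp_nz) (use that in simp)
  have nzd1: "d1 \<noteq> 0" using nz1[of "Suc j"] by (simp add: d1_def u_def)
  have nzd2: "d2 \<noteq> 0" using nz1[of "Suc r"] by (simp add: d2_def w_def)
  have nzd3: "d3 \<noteq> 0" using nz1[of "m+k+Suc n"] x10 by (simp add: d3_def)
  have "1 - q^(m+k) \<noteq> 0" by (rule nz1) (use k in simp)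
  hence nzd4: "d4 \<noteq> 0" unfolding d4_def x11 .
  have QSn: "Qp q (Suc n) = A*(1 - q^2*u*w)" using Qp_Suc[of q n] x9 by (simp add: A_def)
  have Qk: "Qp q k = Qj*d1" using Qp_Suc[of q j] k by (simp add: Qj_def d1_def u_def)
  have QSr: "Qp q (Suc r) = Qr*d2" using Qp_Suc[of q r] by (simp add: Qr_def d2_def w_def)
  have bnS: "bn q (Suc n) k = A*(1-q^2*u*w)/(Qj*d1*Qr*d2)"
  proof - have "Suc n - k = Suc r" using n k by simp
    thus ?thesis unfolding bn_def using n k QSn Qk QSr by (simp add: mult_ac) qed
  have bnk: "bn q n k = A/(Qj*d1*Qr)"
  proof - have "n - k = r" using n k by simp
    thus ?thesis unfolding bn_def using n k Qk by (simp add: mult_ac A_def Qr_def) qed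
  have bnj: "bn q n (k-1) = A/(Qj*Qr*d2)"
  proof - have "n - j = Suc r" using n k by simp
    thus ?thesis unfolding bn_def using n k QSr by (simp add: mult_ac A_def Qj_def) qed
  have PS: "Pp q (m+k) (Suc n + 1) = P0*d3"
    using Pp_Suc[of q "m+k" "Suc n"] x10 by (simp add: P0_def d3_def)
  have PN: "Pp q (m+k) (n + 1) = P0" by (simp add: P0_def)
  have P1: "Pp q (m + Suc k) (n + 1) = P0*d3/d4"
  proof -
    have "Pp q (m+k) (Suc (n+1)) = (1 - q^(m+k)) * Pp q (Suc (m+k)) (n+1)" by (rule Pp_Suc_left)
    hence "P0*d3 = d4 * Pp q (m + Suc k) (n+1)" using PS x11 by (simp add: d4_def)
    thus ?thesis using nzd4 by (simp add: field_simps)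
  qed
  have F1: "FF q m (Suc n) k = A*(1-q^2*u*w)/(Qj*d1*Qr*d2)*(c*u)*(1-q^2*u^2*b)/(P0*d3)"
    unfolding FF_def bnS x6 x1 PS ..
  have F0: "FF q m n k = A/(Qj*d1*Qr)*(c*u)*(1-q^2*u^2*b)/P0"
    unfolding FF_def bnk x6 x1 PN ..
  have H0: "HH q m n k = (q*u*w)*c*(A/(Qj*Qr*d2))*(1-q*u^2*b)/P0"
    unfolding HH_def using k x7 bnj x2 PN by simp
  have H1: "HH q m n (Suc k) = (q*u*w)*(c*u)*(A/(Qj*d1*Qr))*(1-q^3*u^2*b)/(P0*d3/d4)"
    unfolding HH_def using k x8 bnk x3 P1 by simp
  show ?thesis unfolding F1 F0 H0 H1 x4 x5
    by (rule alg) (use nzQj nzP0 nzd1 nzd2 nzd3 nzd4 in \<open>simp_all add: d1_def d2_def d3_def d4_def\<close>)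
qed

lemma key: "(1 - q^(m+2*n+1)) * FF q m (Suc n) k - (1+q^n) * FF q m n k
    = HH q m n k - HH q m n (Suc k)"
  if m1: "m \<ge> 1" and kn: "k \<le> Suc n" for m n k
proof -
  consider "k = 0" | "k = Suc n" | j where "k = Suc j" "j < n"
  proof -
    assume a: "k = 0 \<Longrightarrow> thesis" "k = Suc n \<Longrightarrow> thesis" "\<And>j. k = Suc j \<Longrightarrow> j < n \<Longrightarrow> thesis"
    show thesis
    proof (cases k)
      case 0 thus ?thesis using a(1) by simp
    next
      case (Suc j) thus ?thesis using a(2,3) kn by (cases "j = n") auto
    qed
  qed
  thus ?thesis
  proof cases
    case 1 thus ?thesis using key0[OF m1] by simp
  next
    case 2 thus ?thesis using keyLast[OF m1] by simp
  next
    case 3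
    hence "n = Suc (j + (n - j - 1))" by simp
    thus ?thesis using keyMid[OF m1 _ 3(1)] by blast
  qed
qed

lemma step: "(1 - q^(m+2*n+1)) * (\<Sum>k\<le>Suc n. FF q m (Suc n) k) = (1+q^n) * (\<Sum>k\<le>n. FF q m n k)"
  if "m \<ge> 1" for m n
proof -
  have "(\<Sum>k<Suc (Suc n). (1 - q^(m+2*n+1)) * FF q m (Suc n) k - (1+q^n) * FF q m n k)
      = (\<Sum>k<Suc (Suc n). HH q m n k - HH q m n (Suc k))"
    by (rule sum.cong[OF refl], rule key[OF that]) simp
  also have "\<dots> = 0" by (subst sum_lessThan_telescope') (simp add: HH_def)
  finally have "(1 - q^(m+2*n+1)) * (\<Sum>k<Suc (Suc n). FF q m (Suc n) k)
      - (1+q^n) * (\<Sum>k<Suc (Suc n). FF q m n k) = 0"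
    by (simp only: sum_subtractf sum_distrib_left)
  moreover have "(\<Sum>k<Suc (Suc n). FF q m n k) = (\<Sum>k\<le>n. FF q m n k)"
    by (simp add: lessThan_Suc_atMost[symmetric] FF_def)
  ultimately show ?thesis by (simp add: lessThan_Suc_atMost)
qed

lemma main_gen: "(\<Sum>k\<le>n. FF q m n k) = (\<Prod>i<n. 1 + q^i) / (\<Prod>i<n. 1 - q^(m+2*i+1))"
  if "m \<ge> 1" for m n
proof (induction n)
  case 0
  have "1 - q^m \<noteq> 0" using nz1 that .
  thus ?case by (simp add: FF_def Pp_def)
next
  case (Suc n)
  have x: "1 - q^(m+2*n+1) \<noteq> 0" by (rule nz1) simp
  have "(\<Sum>k\<le>Suc n. FF q m (Suc n) k) = ((1 - q^(m+2*n+1)) * (\<Sum>k\<le>Suc n. FF q m (Suc n) k)) / (1 - q^(m+2*n+1))"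
    using x by simp
  also have "\<dots> = (1+q^n) * (\<Sum>k\<le>n. FF q m n k) / (1 - q^(m+2*n+1))"
    by (simp only: step[OF that])
  also have "\<dots> = (1+q^n) * ((\<Prod>i<n. 1 + q^i) / (\<Prod>i<n. 1 - q^(m+2*i+1))) / (1 - q^(m+2*n+1))"
    using Suc.IH by simp
  finally show ?case by (simp add: ac_simps)
qed

end

lemma qfact_eq: "qfact q s = Qp q s / (1-q)^s"
  unfolding qfact_def qint_def Qp_def by (simp add: prod_dividef)

lemma qbinom_eq: "k \<le> n \<Longrightarrow> q \<noteq> 1 \<Longrightarrow> qbinom q n k = bn q n k"
proof -
  assume kn: "k \<le> n" and q1: "q \<noteq> 1"
  have "(1-q)^n = (1-q)^k * (1-q)^(n-k)" using kn by (simp add: power_add[symmetric])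
  moreover have "1 - q \<noteq> 0" using q1 by simp
  ultimately show ?thesis unfolding qbinom_def bn_def qfact_eq using kn
    by (simp add: field_simps)
qed

context
  fixes q :: "'a::field"
  assumes q0: "q \<noteq> 0" and qn: "\<And>j. j \<ge> 1 \<Longrightarrow> q^j \<noteq> 1"
begin

lemma q1: "1 - q \<noteq> 0" using qn[of 1] by simp

lemma term_eq: "qbinom q n k * q^(k choose 2) * qint q (m+2*k) * qfact q (m+k-1) / qfact q (m+n+k)
   = (1-q)^n * FF q m n k" if m1: "m \<ge> 1" and kn: "k \<le> n" for m n k
proof -
  have Q: "Qp q (m+n+k) = Qp q (m+k-1) * Pp q (m+k) (n+1)"
    using Qp_add[of q "m+k-1" "n+1"] m1 by (simp add: add_ac)
  have E: "(1-q)^(m+n+k) = (1-q)^(m+k-1) * ((1-q)^n * (1-q))"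
  proof -
    have "m+n+k = (m+k-1) + (n + 1)" using m1 by simp
    thus ?thesis by (simp only: power_add power_one_right)
  qed
  have nz: "Qp q (m+k-1) \<noteq> 0" "Pp q (m+k) (n+1) \<noteq> 0"
    using Qp_nz[OF q0 qn] Pp_nz[OF q0 qn] m1 by auto
  have q1': "q \<noteq> 1" using q1 by simp
  show ?thesis unfolding qbinom_eq[OF kn q1'] qfact_eq qint_def FF_def Q E
    using nz q1 by (simp add: field_simps)
qed

lemma rhs_eq: "qpoch (-1) q n / (\<Prod>j<n. qint q (m + 2 * j + 1))
   = (1-q)^n * ((\<Prod>i<n. 1 + q^i) / (\<Prod>i<n. 1 - q^(m+2*i+1)))"
proof -
  have nz: "(\<Prod>i<n. 1 - q^(m+2*i+1)) \<noteq> 0"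
  proof -
    have h: "1 - q^(m+2*i+1) \<noteq> 0" for i :: nat using nz1[OF q0 qn, of "m+2*i+1"] by (simp add: mult_ac)
    show ?thesis by (simp only: prod_zero_iff[OF finite_lessThan]) (use h in blast)
  qed
  show ?thesis unfolding qpoch_def qint_def using nz q1
    by (simp add: prod_dividef field_simps)
qed

end

lemma qX_pow: "qX^j = Fract ([:0,1:]^j) 1"
  by (induction j) (simp_all add: qX_def One_fract_def)

lemma qX_nz: "qX \<noteq> 0"
  unfolding qX_def Zero_fract_def by (simp add: eq_fract)

lemma qX_pow_ne1: "j \<ge> 1 \<Longrightarrow> qX^j \<noteq> 1"
proof
  assume j: "j \<ge> 1" and e: "qX^j = 1"
  hence "([:0,1:]::rat poly)^j = 1" unfolding qX_pow One_fract_def by (simp add: eq_fract)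
  hence "degree (([:0,1:]::rat poly)^j) = 0" by simp
  moreover have "degree (([:0,1:]::rat poly)^j) = j" by (subst degree_power_eq) simp_all
  ultimately show False using j by simp
qed

theorem mainTheorem15:
  fixes m n :: nat
  assumes "m \<ge> 1"
  shows "(\<Sum>k=0..n. qbinom qX n k * qX ^ (k choose 2) * qint qX (m + 2 * k)
            * qfact qX (m + k - 1) / qfact qX (m + n + k))
         = qpoch (-1) qX n / (\<Prod>j<n. qint qX (m + 2 * j + 1))"
proof -
  have "(\<Sum>k=0..n. qbinom qX n k * qX ^ (k choose 2) * qint qX (m + 2 * k)
            * qfact qX (m + k - 1) / qfact qX (m + n + k))
      = (\<Sum>k\<le>n. (1-qX)^n * FF qX m n k)"
    unfolding atLeast0AtMost
    by (rule sum.cong[OF refl], rule term_eq[OF qX_nz qX_pow_ne1 assms]) auto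
  also have "\<dots> = (1-qX)^n * (\<Sum>k\<le>n. FF qX m n k)" by (simp add: sum_distrib_left)
  also have "\<dots> = qpoch (-1) qX n / (\<Prod>j<n. qint qX (m + 2 * j + 1))"
    using main_gen[OF qX_nz qX_pow_ne1 assms, of n] rhs_eq[OF qX_nz qX_pow_ne1, of n m] by simp
  finally show ?thesis .
qed

end
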